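(* There is no semi-equivelar map of type $(3^2,4,3,6)$ (triangle, triangle, quadrilateral, triangle, hexagon around each vertex, in this cyclic order) on the closed surface of Euler characteristic $-1$. *)

theory Defs
  imports Main
begin

text \<open>Combinatorial maps on closed surfaces. A face is a polygon, given as a list of
  distinct vertices in cyclic order (at least 3). A map is a finite set of faces.\<close>

definition face_edges :: "'a list \<Rightarrow> 'a set set" where
  "face_edges f = {{f ! i, f ! (Suc i mod length f)} | i. i < length f}"

definition map_vertices :: "'a list set \<Rightarrow> 'a set" where
  "map_vertices F = \<Union> (set ` F)"

definition map_edges :: "'a list set \<Rightarrow> 'a set set" where
  "map_edges F = \<Union> (face_edges ` F)"

definition euler_char :: "'a list set \<Rightarrow> int" where
  "euler_char F = int (card (map_vertices F)) - int (card (map_edges F)) + int (card F)"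

text \<open>fs lists all faces through v in a cyclic order, consecutive faces sharing an edge
  through v (the link of v is a single cycle).\<close>
definition face_cycle_at :: "'a list set \<Rightarrow> 'a \<Rightarrow> 'a list list \<Rightarrow> bool" where
  "face_cycle_at F v fs \<longleftrightarrow> length fs \<ge> 3 \<and> distinct fs \<and> set fs = {f \<in> F. v \<in> set f} \<and>
     (\<forall>i < length fs. \<exists>u. {v, u} \<in> face_edges (fs ! i) \<inter> face_edges (fs ! (Suc i mod length fs)))"

definition closed_surface_map :: "'a list set \<Rightarrow> bool" where
  "closed_surface_map F \<longleftrightarrow> finite F \<and> F \<noteq> {} \<and>
     (\<forall>f\<in>F. distinct f \<and> length f \<ge> 3) \<and>
     (\<forall>f\<in>F. \<forall>g\<in>F. f \<noteq> g \<longrightarrow>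
        set f \<inter> set g = {} \<or> card (set f \<inter> set g) = 1 \<or>
        set f \<inter> set g \<in> face_edges f \<inter> face_edges g) \<and>
     (\<forall>e\<in>map_edges F. card {f \<in> F. e \<in> face_edges f} = 2) \<and>
     (\<forall>v\<in>map_vertices F. \<exists>fs. face_cycle_at F v fs) \<and>
     (\<forall>u\<in>map_vertices F. \<forall>w\<in>map_vertices F.
        (u, w) \<in> {(x, y). {x, y} \<in> map_edges F}\<^sup>*)"

definition semi_equivelar_of_type :: "'a list set \<Rightarrow> nat list \<Rightarrow> bool" where
  "semi_equivelar_of_type F t \<longleftrightarrow> closed_surface_map F \<and>
     (\<forall>v\<in>map_vertices F. \<exists>fs. face_cycle_at F v fs \<and>
        (\<exists>k. map length fs = rotate k t \<or> map length fs = rotate k (rev t)))"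

end

theory Submission
  imports Defs "HOL-Library.Multiset" "HOL-Combinatorics.Cycles"
begin



lemma suc_mod: "i < n \<Longrightarrow> Suc i mod n = (if Suc i = n then 0 else Suc i)"
  by auto

lemma face_edges_iff:
  "e \<in> face_edges f \<longleftrightarrow> (\<exists>i<length f. e = {f ! i, f ! (Suc i mod length f)})"
  unfolding face_edges_def by auto

lemma nbr_iff:
  assumes d: "distinct f" and n: "length f \<ge> 3" and i: "i < length f"
  shows "{f ! i, u} \<in> face_edges f \<longleftrightarrow>
     u = f ! (Suc i mod length f) \<or> u = f ! ((i + length f - 1) mod length f)"
proof -
  let ?n = "length f"
  have inj: "\<And>a b. a < ?n \<Longrightarrow> b < ?n \<Longrightarrow> f ! a = f ! b \<longleftrightarrow> a = b"
    using d by (simp add: nth_eq_iff_index_eq)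
  show ?thesis
  proof
    assume "{f ! i, u} \<in> face_edges f"
    then obtain j where j: "j < ?n" and e: "{f ! i, u} = {f ! j, f ! (Suc j mod ?n)}"
      by (auto simp: face_edges_iff)
    have sj: "Suc j mod ?n < ?n" using n by (intro mod_less_divisor) linarith
    from e have "(f ! i = f ! j \<and> u = f ! (Suc j mod ?n)) \<or> (f ! i = f ! (Suc j mod ?n) \<and> u = f ! j)"
      by (auto simp: doubleton_eq_iff)
    then show "u = f ! (Suc i mod ?n) \<or> u = f ! ((i + ?n - 1) mod ?n)"
    proof
      assume "f ! i = f ! j \<and> u = f ! (Suc j mod ?n)"
      then show ?thesis using inj[OF i j] by auto
    next
      assume h: "f ! i = f ! (Suc j mod ?n) \<and> u = f ! j"
      then have "i = Suc j mod ?n" using inj[OF i sj] by auto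
      then have "j = (i + ?n - 1) mod ?n" using j n
        by (cases "Suc j = ?n") (simp_all add: suc_mod)
      then show ?thesis using h by auto
    qed
  next
    assume "u = f ! (Suc i mod ?n) \<or> u = f ! ((i + ?n - 1) mod ?n)"
    then show "{f ! i, u} \<in> face_edges f"
    proof
      assume "u = f ! (Suc i mod ?n)"
      then show ?thesis using i by (auto simp: face_edges_iff)
    next
      assume u: "u = f ! ((i + ?n - 1) mod ?n)"
      define j where "j = (i + ?n - 1) mod ?n"
      have jn: "j < ?n" unfolding j_def using n by (intro mod_less_divisor) linarith
      have "Suc j mod ?n = i"
      proof (cases "i = 0")
        case True
        then have "j = ?n - 1" unfolding j_def using n by simp
        then show ?thesis using True n by (simp add: suc_mod)
      next
        case False
        then have e: "i + ?n - 1 = (i - 1) + ?n" by simp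
        have "j = ((i - 1) + ?n) mod ?n" unfolding j_def by (simp only: e)
        then have "j = i - 1" using i by simp
        then show ?thesis using False i by (simp add: suc_mod)
      qed
      moreover have "u = f ! j" using u j_def by simp
      ultimately have "{f ! i, u} = {f ! j, f ! (Suc j mod ?n)}" by (simp add: insert_commute)
      then show ?thesis using jn unfolding face_edges_iff by blast
    qed
  qed
qed

lemma card_face_edges:
  assumes d: "distinct f" and n: "length f \<ge> 3"
  shows "card (face_edges f) = length f"
proof -
  let ?n = "length f"
  let ?g = "\<lambda>i. {f ! i, f ! (Suc i mod ?n)}"
  have fe: "face_edges f = ?g ` {..<?n}" by (auto simp: face_edges_iff)
  have inj: "\<And>a b. a < ?n \<Longrightarrow> b < ?n \<Longrightarrow> f ! a = f ! b \<longleftrightarrow> a = b"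
    using d by (simp add: nth_eq_iff_index_eq)
  have "inj_on ?g {..<?n}"
  proof (rule inj_onI)
    fix a b assume a: "a \<in> {..<?n}" and b: "b \<in> {..<?n}" and e: "?g a = ?g b"
    have a': "Suc a mod ?n < ?n" "Suc b mod ?n < ?n" using n by (auto intro: mod_less_divisor)
    from e have "(f ! a = f ! b \<and> f ! (Suc a mod ?n) = f ! (Suc b mod ?n)) \<or>
       (f ! a = f ! (Suc b mod ?n) \<and> f ! (Suc a mod ?n) = f ! b)"
      by (auto simp: doubleton_eq_iff)
    then show "a = b"
    proof
      assume "f ! a = f ! b \<and> f ! (Suc a mod ?n) = f ! (Suc b mod ?n)"
      then show ?thesis using inj[of a b] a b by simp
    next
      assume "f ! a = f ! (Suc b mod ?n) \<and> f ! (Suc a mod ?n) = f ! b"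
      then have "a = Suc b mod ?n" "Suc a mod ?n = b" using inj[of a "Suc b mod ?n"] inj[of "Suc a mod ?n" b] a b a' by simp_all
      then show ?thesis using a b n by (simp add: suc_mod split: if_splits)
    qed
  qed
  then show ?thesis unfolding fe by (simp add: card_image)
qed

lemma face_edge_card: "e \<in> face_edges f \<Longrightarrow> card e \<le> 2"
  unfolding face_edges_iff by (auto simp: card_insert_if)

lemma face_edge_sub: "{a, b} \<in> face_edges f \<Longrightarrow> a \<in> set f \<and> b \<in> set f"
proof -
  assume "{a, b} \<in> face_edges f"
  then obtain i where i: "i < length f" and e: "{a,b} = {f ! i, f ! (Suc i mod length f)}"
    by (auto simp: face_edges_iff)
  have "Suc i mod length f < length f" using i by (intro mod_less_divisor) auto
  then show ?thesis using i e by (auto simp: doubleton_eq_iff)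
qed

lemma face_edge_neq: "distinct f \<Longrightarrow> length f \<ge> 3 \<Longrightarrow> {a, b} \<in> face_edges f \<Longrightarrow> a \<noteq> b"
proof -
  assume d: "distinct f" and n: "length f \<ge> 3" and e: "{a, b} \<in> face_edges f"
  then obtain i where i: "i < length f" and ee: "{a,b} = {f ! i, f ! (Suc i mod length f)}"
    by (auto simp: face_edges_iff)
  have "f ! i \<noteq> f ! (Suc i mod length f)"
  proof
    assume "f ! i = f ! (Suc i mod length f)"
    moreover have "Suc i mod length f < length f" using n by (intro mod_less_divisor) linarith
    ultimately have "i = Suc i mod length f" using d i by (simp add: nth_eq_iff_index_eq)
    then show False using i n by (simp add: suc_mod split: if_splits)
  qed
  then show "a \<noteq> b" using ee by (auto simp: doubleton_eq_iff)
qed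

lemma double_count:
  assumes "finite A" "finite B" "\<And>f. f \<in> A \<Longrightarrow> S f \<subseteq> B"
  shows "(\<Sum>f\<in>A. card (S f)) = (\<Sum>b\<in>B. card {f\<in>A. b \<in> S f})"
proof -
  have "(\<Sum>f\<in>A. card (S f)) = (\<Sum>f\<in>A. \<Sum>b\<in>B. if b \<in> S f then 1 else 0)"
  proof (rule sum.cong[OF refl])
    fix f assume "f \<in> A"
    then have "S f = {b\<in>B. b \<in> S f}" using assms(3) by auto
    then have "card (S f) = (\<Sum>b\<in>{b\<in>B. b \<in> S f}. 1)" by (metis card_eq_sum)
    also have "\<dots> = (\<Sum>b\<in>B. if b \<in> S f then 1 else 0)"
      using assms(2) by (simp add: sum.inter_filter[symmetric])
    finally show "card (S f) = (\<Sum>b\<in>B. if b \<in> S f then 1 else 0)" .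
  qed
  also have "\<dots> = (\<Sum>b\<in>B. \<Sum>f\<in>A. if b \<in> S f then 1 else 0)" by (rule sum.swap)
  also have "\<dots> = (\<Sum>b\<in>B. card {f\<in>A. b \<in> S f})"
    using assms(1) by (simp add: sum.inter_filter[symmetric])
  finally show ?thesis .
qed




lemma card2_eq: "card X = 2 \<Longrightarrow> a \<in> X \<Longrightarrow> b \<in> X \<Longrightarrow> a \<noteq> b \<Longrightarrow> X = {a, b}"
proof -
  assume c: "card X = 2" and ab: "a \<in> X" "b \<in> X" "a \<noteq> b"
  have fin: "finite X" using c by (intro card_ge_0_finite) simp
  have "{a,b} \<subseteq> X" using ab by auto
  moreover have "card {a,b} = card X" using c ab by simp
  ultimately show ?thesis using fin by (metis card_subset_eq)
qed

lemma nbr2: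
  assumes d: "distinct f" and n: "length f \<ge> 3" and v: "v \<in> set f"
    and a: "{v, a} \<in> face_edges f" and b: "{v, b} \<in> face_edges f" and c: "{v, c} \<in> face_edges f"
    and ab: "a \<noteq> b"
  shows "c = a \<or> c = b"
proof -
  obtain i where i: "i < length f" and vi: "v = f ! i" using v by (metis in_set_conv_nth)
  have "\<And>w. {v, w} \<in> face_edges f \<Longrightarrow> w = f ! (Suc i mod length f) \<or> w = f ! ((i + length f - 1) mod length f)"
    using nbr_iff[OF d n i] vi by simp
  from this[OF a] this[OF b] this[OF c] ab show ?thesis by metis
qed

locale SEM =
  fixes F :: "'a list set"
  assumes se: "semi_equivelar_of_type F [3,3,4,3,6]"
begin

abbreviation "V \<equiv> map_vertices F"
definition EF :: "'a set \<Rightarrow> 'a list set" where "EF e = {f \<in> F. e \<in> face_edges f}"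

lemma csm: "closed_surface_map F" using se unfolding semi_equivelar_of_type_def by blast

lemma finF: "finite F" using csm unfolding closed_surface_map_def by blast

lemma face_ok: "f \<in> F \<Longrightarrow> distinct f \<and> length f \<ge> 3"
  using csm unfolding closed_surface_map_def by blast

lemma finV: "finite V"
  unfolding map_vertices_def using finF by auto

lemma inV: "f \<in> F \<Longrightarrow> v \<in> set f \<Longrightarrow> v \<in> V"
  unfolding map_vertices_def by auto

lemma meet: "f \<in> F \<Longrightarrow> g \<in> F \<Longrightarrow> f \<noteq> g \<Longrightarrow>
   set f \<inter> set g = {} \<or> card (set f \<inter> set g) = 1 \<or> set f \<inter> set g \<in> face_edges f \<inter> face_edges g"
  using csm unfolding closed_surface_map_def by blast

lemma two_common:
  assumes f: "f \<in> F" and g: "g \<in> F" and fg: "f \<noteq> g" and ab: "a \<noteq> b"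
    and a: "a \<in> set f" "a \<in> set g" and b: "b \<in> set f" "b \<in> set g"
  shows "{a, b} \<in> face_edges f \<and> {a, b} \<in> face_edges g \<and> set f \<inter> set g = {a, b}"
proof -
  let ?I = "set f \<inter> set g"
  have sub: "{a, b} \<subseteq> ?I" using a b by auto
  have c2: "card {a,b} = 2" using ab by simp
  have fin: "finite ?I" by simp
  have ge: "card ?I \<ge> 2" using card_mono[OF fin sub] c2 by simp
  then have "?I \<noteq> {}" "card ?I \<noteq> 1" by auto
  then have I: "?I \<in> face_edges f \<inter> face_edges g" using meet[OF f g fg] by blast
  then have "card ?I \<le> 2" using face_edge_card by blast
  then have "?I = {a, b}" using card_subset_eq[OF fin sub] c2 ge by simp
  then show ?thesis using I by auto
qed

lemma three_common:
  assumes f: "f \<in> F" and g: "g \<in> F" and fg: "f \<noteq> g" and d: "a \<noteq> b" "a \<noteq> c" "b \<noteq> c"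
    and a: "a \<in> set f" "a \<in> set g" and b: "b \<in> set f" "b \<in> set g" and c: "c \<in> set f" "c \<in> set g"
  shows False
proof -
  have "set f \<inter> set g = {a, b}" using two_common[OF f g fg d(1) a b] by blast
  then show False using c d by auto
qed

lemma edge_in_map: "f \<in> F \<Longrightarrow> e \<in> face_edges f \<Longrightarrow> e \<in> map_edges F"
  unfolding map_edges_def by auto

lemma EF_card: "f \<in> F \<Longrightarrow> e \<in> face_edges f \<Longrightarrow> card (EF e) = 2"
  using csm edge_in_map unfolding closed_surface_map_def EF_def by blast

lemma EF_eq: "f \<in> F \<Longrightarrow> g \<in> F \<Longrightarrow> f \<noteq> g \<Longrightarrow> e \<in> face_edges f \<Longrightarrow> e \<in> face_edges g \<Longrightarrow> EF e = {f, g}"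
  using card2_eq[OF EF_card] unfolding EF_def by auto

lemma EF_mem: "f \<in> EF e \<longleftrightarrow> f \<in> F \<and> e \<in> face_edges f"
  unfolding EF_def by auto

end



context SEM begin

definition cfg where "cfg v H A B S C p x y z q \<longleftrightarrow>
  {f\<in>F. v \<in> set f} = {H,A,B,S,C} \<and> distinct [H,A,B,S,C] \<and> length H = 6 \<and> length A = 3 \<and>
  length B = 3 \<and> length S = 4 \<and> length C = 3 \<and>
  EF {v,p} = {H,A} \<and> EF {v,x} = {A,B} \<and> EF {v,y} = {B,S} \<and> EF {v,z} = {S,C} \<and> EF {v,q} = {C,H} \<and>
  (\<forall>g w. g \<in> F \<longrightarrow> {v,w} \<in> face_edges g \<longrightarrow> w \<in> {p,x,y,z,q})"

definition cyc where "cyc v g0 g1 g2 g3 g4 w0 w1 w2 w3 w4 \<longleftrightarrow>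
  {f\<in>F. v \<in> set f} = {g0,g1,g2,g3,g4} \<and> distinct [g0,g1,g2,g3,g4] \<and>
  EF {v,w0} = {g0,g1} \<and> EF {v,w1} = {g1,g2} \<and> EF {v,w2} = {g2,g3} \<and> EF {v,w3} = {g3,g4} \<and>
  EF {v,w4} = {g4,g0} \<and>
  (\<forall>g w. g \<in> F \<longrightarrow> {v,w} \<in> face_edges g \<longrightarrow> w \<in> {w0,w1,w2,w3,w4})"

lemma cyc_rot: "cyc v g0 g1 g2 g3 g4 w0 w1 w2 w3 w4 \<Longrightarrow> cyc v g1 g2 g3 g4 g0 w1 w2 w3 w4 w0"
  unfolding cyc_def by (auto simp: insert_commute)

lemma cyc_fwd: "cyc v g0 g1 g2 g3 g4 w0 w1 w2 w3 w4 \<Longrightarrow>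
  length g0 = 6 \<Longrightarrow> length g1 = 3 \<Longrightarrow> length g2 = 3 \<Longrightarrow> length g3 = 4 \<Longrightarrow> length g4 = 3 \<Longrightarrow>
  cfg v g0 g1 g2 g3 g4 w0 w1 w2 w3 w4"
  unfolding cyc_def cfg_def by auto

lemma cyc_bwd: "cyc v g0 g1 g2 g3 g4 w0 w1 w2 w3 w4 \<Longrightarrow>
  length g0 = 6 \<Longrightarrow> length g1 = 3 \<Longrightarrow> length g2 = 4 \<Longrightarrow> length g3 = 3 \<Longrightarrow> length g4 = 3 \<Longrightarrow>
  cfg v g0 g4 g3 g2 g1 w4 w3 w2 w1 w0"
  unfolding cyc_def cfg_def by (auto simp: insert_commute)

lemma local_cfg:
  assumes v: "v \<in> V"
  shows "\<exists>H A B S C p x y z q. cfg v H A B S C p x y z q"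
proof -
  obtain fs k where fc: "face_cycle_at F v fs"
    and lk: "map length fs = rotate k [3,3,4,3,6] \<or> map length fs = rotate k (rev [3,3,4,3,6])"
    using se v unfolding semi_equivelar_of_type_def by blast
  have "length (map length fs) = 5" using lk
  proof
    assume "map length fs = rotate k [3,3,4,3,6]"
    from arg_cong[OF this, of length] show ?thesis by simp
  next
    assume "map length fs = rotate k (rev [3,3,4,3,6])"
    from arg_cong[OF this, of length] show ?thesis by simp
  qed
  then have l5: "length fs = 5" by simp
  then obtain f0 f1 f2 f3 f4 where fs: "fs = [f0,f1,f2,f3,f4]"
    by (auto simp: length_Suc_conv numeral_eq_Suc)
  have dist: "distinct [f0,f1,f2,f3,f4]" and faces: "{f\<in>F. v \<in> set f} = {f0,f1,f2,f3,f4}"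
    using fc unfolding face_cycle_at_def fs by auto
  have inF: "f0 \<in> F" "f1 \<in> F" "f2 \<in> F" "f3 \<in> F" "f4 \<in> F" using faces by auto
  have adj: "\<forall>i<5. \<exists>u. {v, u} \<in> face_edges (fs ! i) \<inter> face_edges (fs ! (Suc i mod 5))"
    using fc l5 unfolding face_cycle_at_def by auto
  obtain u0 where u0: "{v,u0} \<in> face_edges f0" "{v,u0} \<in> face_edges f1" using adj[rule_format, of 0] fs by simp blast
  obtain u1 where u1: "{v,u1} \<in> face_edges f1" "{v,u1} \<in> face_edges f2" using adj[rule_format, of 1] fs by simp blast
  obtain u2 where u2: "{v,u2} \<in> face_edges f2" "{v,u2} \<in> face_edges f3" using adj[rule_format, of 2] fs by simp blast
  obtain u3 where u3: "{v,u3} \<in> face_edges f3" "{v,u3} \<in> face_edges f4" using adj[rule_format, of 3] fs by simp blast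
  obtain u4 where u4: "{v,u4} \<in> face_edges f4" "{v,u4} \<in> face_edges f0" using adj[rule_format, of 4] fs by simp blast
  have E0: "EF {v,u0} = {f0,f1}" using EF_eq[OF inF(1,2) _ u0] dist by auto
  have E1: "EF {v,u1} = {f1,f2}" using EF_eq[OF inF(2,3) _ u1] dist by auto
  have E2: "EF {v,u2} = {f2,f3}" using EF_eq[OF inF(3,4) _ u2] dist by auto
  have E3: "EF {v,u3} = {f3,f4}" using EF_eq[OF inF(4,5) _ u3] dist by auto
  have E4: "EF {v,u4} = {f4,f0}" using EF_eq[OF inF(5,1) _ u4] dist by auto
  have d01: "u0 \<noteq> u1" using E0 E1 dist by (auto simp: doubleton_eq_iff)
  have d12: "u1 \<noteq> u2" using E1 E2 dist by (auto simp: doubleton_eq_iff)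
  have d23: "u2 \<noteq> u3" using E2 E3 dist by (auto simp: doubleton_eq_iff)
  have d34: "u3 \<noteq> u4" using E3 E4 dist by (auto simp: doubleton_eq_iff)
  have d40: "u4 \<noteq> u0" using E4 E0 dist by (auto simp: doubleton_eq_iff)
  have vin: "v \<in> set f0" "v \<in> set f1" "v \<in> set f2" "v \<in> set f3" "v \<in> set f4" using faces by auto
  have N: "\<forall>g w. g \<in> F \<longrightarrow> {v,w} \<in> face_edges g \<longrightarrow> w \<in> {u0,u1,u2,u3,u4}"
  proof (intro allI impI)
    fix g w assume g: "g \<in> F" and w: "{v,w} \<in> face_edges g"
    have "v \<in> set g" using face_edge_sub[OF w] by simp
    then have "g \<in> {f0,f1,f2,f3,f4}" using faces g by auto
    then show "w \<in> {u0,u1,u2,u3,u4}"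
    proof (elim insertE)
      assume "g = f0" then show ?thesis using nbr2[OF _ _ vin(1) u4(2) u0(1)] face_ok[OF inF(1)] w d40 by auto
    next
      assume "g = f1" then show ?thesis using nbr2[OF _ _ vin(2) u0(2) u1(1)] face_ok[OF inF(2)] w d01 by auto
    next
      assume "g = f2" then show ?thesis using nbr2[OF _ _ vin(3) u1(2) u2(1)] face_ok[OF inF(3)] w d12 by auto
    next
      assume "g = f3" then show ?thesis using nbr2[OF _ _ vin(4) u2(2) u3(1)] face_ok[OF inF(4)] w d23 by auto
    next
      assume "g = f4" then show ?thesis using nbr2[OF _ _ vin(5) u3(2) u4(1)] face_ok[OF inF(5)] w d34 by auto
    qed simp
  qed
  have C0: "cyc v f0 f1 f2 f3 f4 u0 u1 u2 u3 u4"
    unfolding cyc_def using faces dist E0 E1 E2 E3 E4 N by blast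
  have C1: "cyc v f1 f2 f3 f4 f0 u1 u2 u3 u4 u0" using cyc_rot[OF C0] .
  have C2: "cyc v f2 f3 f4 f0 f1 u2 u3 u4 u0 u1" using cyc_rot[OF C1] .
  have C3: "cyc v f3 f4 f0 f1 f2 u3 u4 u0 u1 u2" using cyc_rot[OF C2] .
  have C4: "cyc v f4 f0 f1 f2 f3 u4 u0 u1 u2 u3" using cyc_rot[OF C3] .
  have rk: "rotate k xs = rotate (k mod 5) xs" if "length xs = 5" for xs :: "nat list"
    using that by (metis rotate_conv_mod)
  have km: "k mod 5 < 5" by simp
  then have kc: "k mod 5 = 0 \<or> k mod 5 = 1 \<or> k mod 5 = 2 \<or> k mod 5 = 3 \<or> k mod 5 = 4" by linarith
  have rots: "rotate 1 [3,3,4,3,6::nat] = [3,4,3,6,3]" "rotate 2 [3,3,4,3,6::nat] = [4,3,6,3,3]"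
    "rotate 3 [3,3,4,3,6::nat] = [3,6,3,3,4]" "rotate 4 [3,3,4,3,6::nat] = [6,3,3,4,3]"
    "rotate 1 [6,3,4,3,3::nat] = [3,4,3,3,6]" "rotate 2 [6,3,4,3,3::nat] = [4,3,3,6,3]"
    "rotate 3 [6,3,4,3,3::nat] = [3,3,6,3,4]" "rotate 4 [6,3,4,3,3::nat] = [3,6,3,4,3]"
    by (simp_all add: numeral_eq_Suc)
  from lk have "map length fs = rotate (k mod 5) [3,3,4,3,6] \<or> map length fs = rotate (k mod 5) [6,3,4,3,3]"
    using rk[of "[3,3,4,3,6]"] rk[of "[6,3,4,3,3]"] by simp
  then show ?thesis
  proof
    assume h: "map length fs = rotate (k mod 5) [3,3,4,3,6]"
    from kc show ?thesis
    proof (elim disjE)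
      assume "k mod 5 = 0" then have "map length fs = [3,3,4,3,6]" using h by simp
      then show ?thesis using cyc_fwd[OF C4] fs by simp blast
    next
      assume "k mod 5 = 1" then have "map length fs = [3,4,3,6,3]" using h rots by simp
      then show ?thesis using cyc_fwd[OF C3] fs by simp blast
    next
      assume "k mod 5 = 2" then have "map length fs = [4,3,6,3,3]" using h rots by simp
      then show ?thesis using cyc_fwd[OF C2] fs by simp blast
    next
      assume "k mod 5 = 3" then have "map length fs = [3,6,3,3,4]" using h rots by simp
      then show ?thesis using cyc_fwd[OF C1] fs by simp blast
    next
      assume "k mod 5 = 4" then have "map length fs = [6,3,3,4,3]" using h rots by simp
      then show ?thesis using cyc_fwd[OF C0] fs by simp blast
    qed
  next
    assume h: "map length fs = rotate (k mod 5) [6,3,4,3,3]"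
    from kc show ?thesis
    proof (elim disjE)
      assume "k mod 5 = 0" then have "map length fs = [6,3,4,3,3]" using h by simp
      then show ?thesis using cyc_bwd[OF C0] fs by simp blast
    next
      assume "k mod 5 = 1" then have "map length fs = [3,4,3,3,6]" using h rots by simp
      then show ?thesis using cyc_bwd[OF C4] fs by simp blast
    next
      assume "k mod 5 = 2" then have "map length fs = [4,3,3,6,3]" using h rots by simp
      then show ?thesis using cyc_bwd[OF C3] fs by simp blast
    next
      assume "k mod 5 = 3" then have "map length fs = [3,3,6,3,4]" using h rots by simp
      then show ?thesis using cyc_bwd[OF C2] fs by simp blast
    next
      assume "k mod 5 = 4" then have "map length fs = [3,6,3,4,3]" using h rots by simp
      then show ?thesis using cyc_bwd[OF C1] fs by simp blast
    qed
  qed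
qed

end



context SEM begin

lemma cfg_ex: "v \<in> V \<Longrightarrow> \<exists>H A B S C p x y z q. cfg v H A B S C p x y z q"
  by (rule local_cfg)

lemma count_at:
  assumes v: "v \<in> V"
  shows "card {f\<in>F. v \<in> set f} = 5"
    "card {f\<in>{f\<in>F. length f = 6}. v \<in> set f} = 1"
    "card {f\<in>{f\<in>F. length f = 4}. v \<in> set f} = 1"
    "card {f\<in>{f\<in>F. length f = 3}. v \<in> set f} = 3"
proof -
  obtain H A B S C p x y z q where c: "cfg v H A B S C p x y z q" using cfg_ex[OF v] by blast
  have fa: "{f\<in>F. v \<in> set f} = {H,A,B,S,C}" and d: "distinct [H,A,B,S,C]"
    and l: "length H = 6" "length A = 3" "length B = 3" "length S = 4" "length C = 3"
    using c unfolding cfg_def by blast+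
  show "card {f\<in>F. v \<in> set f} = 5" using fa d by simp
  have mem: "\<And>f. f \<in> F \<Longrightarrow> v \<in> set f \<Longrightarrow> f = H \<or> f = A \<or> f = B \<or> f = S \<or> f = C"
    using fa by blast
  have hin: "H \<in> F \<and> v \<in> set H" "A \<in> F \<and> v \<in> set A" "B \<in> F \<and> v \<in> set B"
     "S \<in> F \<and> v \<in> set S" "C \<in> F \<and> v \<in> set C" using fa by blast+
  have "{f\<in>{f\<in>F. length f = 6}. v \<in> set f} = {H}" using mem hin l by fastforce
  then show "card {f\<in>{f\<in>F. length f = 6}. v \<in> set f} = 1" by simp
  have "{f\<in>{f\<in>F. length f = 4}. v \<in> set f} = {S}" using mem hin l by fastforce
  then show "card {f\<in>{f\<in>F. length f = 4}. v \<in> set f} = 1" by simp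
  have "{f\<in>{f\<in>F. length f = 3}. v \<in> set f} = {A,B,C}" using mem hin l by fastforce
  then show "card {f\<in>{f\<in>F. length f = 3}. v \<in> set f} = 3" using d by simp
qed

lemma face_len: "f \<in> F \<Longrightarrow> length f = 3 \<or> length f = 4 \<or> length f = 6"
proof -
  assume f: "f \<in> F"
  then have "f \<noteq> []" using face_ok[OF f] by auto
  then have v: "hd f \<in> set f" by simp
  then have hv: "hd f \<in> V" using inV[OF f] by blast
  then obtain H A B S C p x y z q where c: "cfg (hd f) H A B S C p x y z q" using cfg_ex[OF hv] by blast
  have "f \<in> {H,A,B,S,C}" using c f v unfolding cfg_def by blast
  then show ?thesis using c unfolding cfg_def by auto
qed

lemma sum_len:
  assumes "L \<in> {3,4,6}"
  shows "L * card {f\<in>F. length f = L} = (if L = 3 then 3 else 1) * card V"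
proof -
  let ?A = "{f\<in>F. length f = L}"
  have fa: "finite ?A" using finF by simp
  have "(\<Sum>f\<in>?A. card (set f)) = (\<Sum>b\<in>V. card {f\<in>?A. b \<in> set f})"
    by (rule double_count[OF fa finV]) (auto intro: inV)
  also have "\<dots> = (\<Sum>b\<in>V. (if L = 3 then 3 else 1))"
    using count_at assms by (intro sum.cong) auto
  also have "\<dots> = (if L = 3 then 3 else 1) * card V" by simp
  finally have e: "(\<Sum>f\<in>?A. card (set f)) = (if L = 3 then 3 else 1) * card V" .
  have "(\<Sum>f\<in>?A. card (set f)) = (\<Sum>f\<in>?A. L)"
    using face_ok by (intro sum.cong) (auto simp: distinct_card)
  then show ?thesis using e by simp
qed

lemma sum_edges: "2 * card (map_edges F) = 5 * card V"
proof -
  have finE: "finite (map_edges F)"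
    unfolding map_edges_def face_edges_def using finF by auto
  have "(\<Sum>f\<in>F. card (face_edges f)) = (\<Sum>e\<in>map_edges F. card {f\<in>F. e \<in> face_edges f})"
    by (rule double_count[OF finF finE]) (auto intro: edge_in_map)
  also have "\<dots> = (\<Sum>e\<in>map_edges F. 2)"
  proof (intro sum.cong refl)
    fix e assume "e \<in> map_edges F"
    then obtain f where "f \<in> F" "e \<in> face_edges f" unfolding map_edges_def by auto
    then show "card {f\<in>F. e \<in> face_edges f} = 2" using EF_card unfolding EF_def by blast
  qed
  finally have e1: "(\<Sum>f\<in>F. card (face_edges f)) = 2 * card (map_edges F)" by simp
  have "(\<Sum>f\<in>F. card (face_edges f)) = (\<Sum>f\<in>F. card (set f))"
    using face_ok by (intro sum.cong) (auto simp: distinct_card card_face_edges)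
  also have "\<dots> = (\<Sum>b\<in>V. card {f\<in>F. b \<in> set f})"
    by (rule double_count[OF finF finV]) (auto intro: inV)
  also have "\<dots> = (\<Sum>b\<in>V. 5)" using count_at by (intro sum.cong) auto
  finally show ?thesis using e1 by simp
qed

lemma card_F: "card F = card {f\<in>F. length f = 3} + card {f\<in>F. length f = 4} + card {f\<in>F. length f = 6}"
proof -
  have "F = {f\<in>F. length f = 3} \<union> {f\<in>F. length f = 4} \<union> {f\<in>F. length f = 6}"
    using face_len by auto
  then have "card F = card ({f\<in>F. length f = 3} \<union> {f\<in>F. length f = 4} \<union> {f\<in>F. length f = 6})" by simp
  also have "\<dots> = card ({f\<in>F. length f = 3} \<union> {f\<in>F. length f = 4}) + card {f\<in>F. length f = 6}"
    using finF by (intro card_Un_disjoint) auto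
  also have "\<dots> = card {f\<in>F. length f = 3} + card {f\<in>F. length f = 4} + card {f\<in>F. length f = 6}"
    using finF by (subst card_Un_disjoint) auto
  finally show ?thesis .
qed

lemma counts:
  assumes "euler_char F = -1"
  shows "card V = 12" "card {f\<in>F. length f = 6} = 2"
proof -
  have a: "3 * card {f\<in>F. length f = 3} = 3 * card V" using sum_len[of 3] by simp
  have b: "4 * card {f\<in>F. length f = 4} = card V" using sum_len[of 4] by simp
  have c: "6 * card {f\<in>F. length f = 6} = card V" using sum_len[of 6] by simp
  have e: "2 * card (map_edges F) = 5 * card V" by (rule sum_edges)
  have ch: "int (card V) - int (card (map_edges F)) + int (card F) = -1"
    using assms unfolding euler_char_def by simp
  show "card V = 12" using a b c e ch card_F by linarith
  then show "card {f\<in>F. length f = 6} = 2" using c by linarith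
qed

end



lemma fe_img: "face_edges f = (\<lambda>i. {f ! i, f ! (Suc i mod length f)}) ` {..<length f}"
  unfolding face_edges_def by auto
lemma lt3: "{..<Suc (Suc (Suc 0))} = {0,1,2}" by auto
lemma lt4: "{..<Suc (Suc (Suc (Suc 0)))} = {0,1,2,3}" by auto
lemma lt6: "{..<Suc (Suc (Suc (Suc (Suc (Suc 0)))))} = {0,1,2,3,4,5}" by auto
lemma fe3: "face_edges [a,b,c] = {{a,b},{b,c},{c,a}}"
  unfolding fe_img by (simp add: lt3 insert_commute)
lemma fe4: "face_edges [a,b,c,d] = {{a,b},{b,c},{c,d},{d,a}}"
  unfolding fe_img by (simp add: lt4 insert_commute)
lemma fe6: "face_edges [a,b,c,d,e,f] = {{a,b},{b,c},{c,d},{d,e},{e,f},{f,a}}"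
  unfolding fe_img by (simp add: lt6 insert_commute)

lemma set3:
  assumes "distinct f" "length f = 3" "a \<in> set f" "b \<in> set f" "c \<in> set f" "a \<noteq> b" "a \<noteq> c" "b \<noteq> c"
  shows "set f = {a,b,c}"
proof -
  have "{a,b,c} \<subseteq> set f" using assms by auto
  moreover have "card {a,b,c} = card (set f)" using assms by (simp add: distinct_card)
  ultimately show ?thesis by (metis card_subset_eq finite_set)
qed

lemma sq4:
  assumes d: "distinct S" and l: "length S = 4" and y: "{v,y} \<in> face_edges S" and z: "{v,z} \<in> face_edges S"
    and yz: "y \<noteq> z"
  shows "\<exists>w. set S = {v,y,z,w} \<and> w \<notin> {v,y,z} \<and> {y,w} \<in> face_edges S \<and> {z,w} \<in> face_edges S"
proof -
  obtain a b c e where S: "S = [a,b,c,e]" using l by (auto simp: length_Suc_conv numeral_eq_Suc)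
  have dd: "a \<noteq> b" "a \<noteq> c" "a \<noteq> e" "b \<noteq> c" "b \<noteq> e" "c \<noteq> e" using d S by auto
  have v: "v \<in> set S" using face_edge_sub[OF y] by simp
  have Y: "{v,y} \<in> {{a,b},{b,c},{c,e},{e,a}}" using y S fe4 by metis
  have Z: "{v,z} \<in> {{a,b},{b,c},{c,e},{e,a}}" using z S fe4 by metis
  from v S have "v = a \<or> v = b \<or> v = c \<or> v = e" by auto
  then show ?thesis
  proof (elim disjE)
    assume "v = a"
    then have "{y,z} = {b,e}" using Y Z dd yz by (auto simp: doubleton_eq_iff)
    then show ?thesis using S dd \<open>v = a\<close> by (intro exI[of _ c]) (auto simp: fe4 doubleton_eq_iff insert_commute)
  next
    assume "v = b"
    then have "{y,z} = {a,c}" using Y Z dd yz by (auto simp: doubleton_eq_iff)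
    then show ?thesis using S dd \<open>v = b\<close> by (intro exI[of _ e]) (auto simp: fe4 doubleton_eq_iff insert_commute)
  next
    assume "v = c"
    then have "{y,z} = {b,e}" using Y Z dd yz by (auto simp: doubleton_eq_iff)
    then show ?thesis using S dd \<open>v = c\<close> by (intro exI[of _ a]) (auto simp: fe4 doubleton_eq_iff insert_commute)
  next
    assume "v = e"
    then have "{y,z} = {a,c}" using Y Z dd yz by (auto simp: doubleton_eq_iff)
    then show ?thesis using S dd \<open>v = e\<close> by (intro exI[of _ b]) (auto simp: fe4 doubleton_eq_iff insert_commute)
  qed
qed

context SEM begin

lemma cfg_basic:
  assumes c: "cfg v H A B S C p x y z q"
  shows cfg_inF: "H \<in> F" "A \<in> F" "B \<in> F" "S \<in> F" "C \<in> F"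
    and cfg_vin: "v \<in> set H" "v \<in> set A" "v \<in> set B" "v \<in> set S" "v \<in> set C"
    and cfg_len: "length H = 6" "length A = 3" "length B = 3" "length S = 4" "length C = 3"
    and cfg_fdist: "H \<noteq> A" "H \<noteq> B" "H \<noteq> S" "H \<noteq> C" "A \<noteq> B" "A \<noteq> S" "A \<noteq> C" "B \<noteq> S" "B \<noteq> C" "S \<noteq> C"
    and cfg_EF: "EF {v,p} = {H,A}" "EF {v,x} = {A,B}" "EF {v,y} = {B,S}" "EF {v,z} = {S,C}" "EF {v,q} = {C,H}"
    and cfg_faces: "{f\<in>F. v \<in> set f} = {H,A,B,S,C}"
    and cfg_nb: "\<And>g w. g \<in> F \<Longrightarrow> {v,w} \<in> face_edges g \<Longrightarrow> w \<in> {p,x,y,z,q}"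
  using c unfolding cfg_def by auto

lemma cfg_edges:
  assumes c: "cfg v H A B S C p x y z q"
  shows "{v,p} \<in> face_edges H" "{v,p} \<in> face_edges A" "{v,x} \<in> face_edges A" "{v,x} \<in> face_edges B"
    "{v,y} \<in> face_edges B" "{v,y} \<in> face_edges S" "{v,z} \<in> face_edges S" "{v,z} \<in> face_edges C"
    "{v,q} \<in> face_edges C" "{v,q} \<in> face_edges H"
  using cfg_EF[OF c] unfolding EF_def by blast+

lemma cfg_udist:
  assumes c: "cfg v H A B S C p x y z q"
  shows "p \<noteq> x" "p \<noteq> y" "p \<noteq> z" "p \<noteq> q" "x \<noteq> y" "x \<noteq> z" "x \<noteq> q" "y \<noteq> z" "y \<noteq> q" "z \<noteq> q"
    "p \<noteq> v" "x \<noteq> v" "y \<noteq> v" "z \<noteq> v" "q \<noteq> v"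
proof -
  note E = cfg_EF[OF c] and D = cfg_fdist[OF c]
  show "p \<noteq> x" "p \<noteq> y" "p \<noteq> z" "p \<noteq> q" "x \<noteq> y" "x \<noteq> z" "x \<noteq> q" "y \<noteq> z" "y \<noteq> q" "z \<noteq> q"
    using E D by (auto simp: doubleton_eq_iff)
  note ed = cfg_edges[OF c] and ok = face_ok[OF cfg_inF(1)[OF c]] face_ok[OF cfg_inF(2)[OF c]]
     face_ok[OF cfg_inF(3)[OF c]] face_ok[OF cfg_inF(4)[OF c]]
  show "p \<noteq> v" using face_edge_neq[OF _ _ ed(1)] ok by metis
  show "x \<noteq> v" using face_edge_neq[OF _ _ ed(3)] ok by metis
  show "y \<noteq> v" using face_edge_neq[OF _ _ ed(5)] ok by metis
  show "z \<noteq> v" using face_edge_neq[OF _ _ ed(7)] ok by metis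
  show "q \<noteq> v" using face_edge_neq[OF _ _ ed(10)] ok by metis
qed

lemma cfg_sets:
  assumes c: "cfg v H A B S C p x y z q"
  shows "set A = {v,p,x}" "set B = {v,x,y}" "set C = {v,z,q}"
proof -
  note ed = cfg_edges[OF c] and u = cfg_udist[OF c] and l = cfg_len[OF c]
  have dA: "distinct A" "distinct B" "distinct C" using face_ok cfg_inF[OF c] by auto
  show "set A = {v,p,x}" using set3[OF dA(1) l(2)] face_edge_sub[OF ed(2)] face_edge_sub[OF ed(3)] u by auto
  show "set B = {v,x,y}" using set3[OF dA(2) l(3)] face_edge_sub[OF ed(4)] face_edge_sub[OF ed(5)] u by auto
  show "set C = {v,z,q}" using set3[OF dA(3) l(5)] face_edge_sub[OF ed(8)] face_edge_sub[OF ed(9)] u by auto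
qed

lemma cfg_V:
  assumes c: "cfg v H A B S C p x y z q"
  shows "v \<in> V" "p \<in> V" "x \<in> V" "y \<in> V" "z \<in> V" "q \<in> V"
proof -
  note ed = cfg_edges[OF c] and i = cfg_inF[OF c]
  show "v \<in> V" "p \<in> V" "x \<in> V" "y \<in> V" "z \<in> V" "q \<in> V"
    using face_edge_sub[OF ed(1)] face_edge_sub[OF ed(3)] face_edge_sub[OF ed(5)]
      face_edge_sub[OF ed(7)] face_edge_sub[OF ed(9)] inV i by blast+
qed

lemma cfg_sq:
  assumes c: "cfg v H A B S C p x y z q"
  shows "\<exists>w. set S = {v,y,z,w} \<and> w \<notin> {v,y,z}"
  using sq4[of S v y z] face_ok[OF cfg_inF(4)[OF c]] cfg_len(4)[OF c] cfg_edges(6,7)[OF c] cfg_udist(8)[OF c]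
  by blast

end

locale SEM2 = SEM +
  fixes H1 H2
  assumes hexs: "{f\<in>F. length f = 6} = {H1,H2}" and H12: "H1 \<noteq> H2"
begin

lemma H1F: "H1 \<in> F" "H2 \<in> F" "length H1 = 6" "length H2 = 6" using hexs by auto

lemma one_hex: "v \<in> V \<Longrightarrow> (v \<in> set H1) \<noteq> (v \<in> set H2)"
proof -
  assume v: "v \<in> V"
  define X where "X = {f\<in>{H1,H2}. v \<in> set f}"
  have c1: "card X = 1" using count_at(2)[OF v] hexs unfolding X_def by simp
  show ?thesis
  proof (cases "v \<in> set H1"; cases "v \<in> set H2")
    assume "v \<in> set H1" "v \<in> set H2"
    then have "X = {H1,H2}" unfolding X_def by auto
    then show ?thesis using c1 H12 by simp
  next
    assume "v \<notin> set H1" "v \<notin> set H2"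
    then have "X = {}" unfolding X_def by auto
    then show ?thesis using c1 by simp
  qed auto
qed

lemma hexsV: "set H1 \<subseteq> V" "set H2 \<subseteq> V" using H1F inV by auto

lemma cfg_hex:
  assumes c: "cfg v H A B S C p x y z q"
  shows "H = H1 \<or> H = H2"
  using cfg_inF(1)[OF c] cfg_len(1)[OF c] hexs by blast

lemma hex_unique:
  assumes c: "cfg v H A B S C p x y z q" and K: "K = H1 \<or> K = H2" and vK: "v \<in> set K"
  shows "K = H"
proof -
  have "K \<in> {f\<in>F. v \<in> set f}" using K vK H1F by auto
  then have "K \<in> {H,A,B,S,C}" using cfg_faces[OF c] by blast
  moreover have "length K = 6" using K H1F by auto
  ultimately show ?thesis using cfg_len[OF c] by auto
qed

lemma other_hex:
  assumes "H = H1 \<or> H = H2"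
  shows "\<exists>K. (K = H1 \<or> K = H2) \<and> K \<noteq> H \<and> set K = V - set H"
proof -
  have "set H2 = V - set H1" "set H1 = V - set H2"
    using one_hex hexsV by blast+
  then show ?thesis using assms H12 by metis
qed

lemma S1:
  assumes c: "cfg v H A B S C p x y z q"
  shows "p \<in> set H" "q \<in> set H" "x \<notin> set H" "y \<notin> set H" "z \<notin> set H"
proof -
  note ed = cfg_edges[OF c] and u = cfg_udist[OF c] and i = cfg_inF[OF c] and D = cfg_fdist[OF c]
  note E = cfg_EF[OF c]
  show "p \<in> set H" "q \<in> set H" using face_edge_sub[OF ed(1)] face_edge_sub[OF ed(10)] by auto
  show "x \<notin> set H"
  proof
    assume "x \<in> set H"
    then show False using three_common[OF i(2) i(1) D(1)[symmetric], of v p x] u cfg_vin[OF c]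
      \<open>p \<in> set H\<close> cfg_sets(1)[OF c] by auto
  qed
  show "y \<notin> set H"
  proof
    assume "y \<in> set H"
    then have "{v,y} \<in> face_edges H" using two_common[OF i(3) i(1) D(2)[symmetric], of v y] u cfg_vin[OF c]
      cfg_sets(2)[OF c] by auto
    then have "H \<in> EF {v,y}" using i unfolding EF_def by auto
    then show False using E D by auto
  qed
  show "z \<notin> set H"
  proof
    assume "z \<in> set H"
    then have "{v,z} \<in> face_edges H" using two_common[OF i(5) i(1) D(4)[symmetric], of v z] u cfg_vin[OF c]
      cfg_sets(3)[OF c] by auto
    then have "H \<in> EF {v,z}" using i unfolding EF_def by auto
    then show False using E D by auto
  qed
qed

end



context SEM2 begin

lemma apex:
  assumes c: "cfg v H A B S C p x y z q"
    and c': "cfg x H' A' B' S' C' p' x' y' z' q'"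
  shows "x' = v" "p' = y" "y' = p" "A' = B" "B' = A" "EF {x,p} = {A,S'}"
proof -
  note s1 = S1[OF c] and s1' = S1[OF c']
  note u = cfg_udist[OF c] and u' = cfg_udist[OF c']
  note st = cfg_sets[OF c] and st' = cfg_sets[OF c']
  note E = cfg_EF[OF c] and E' = cfg_EF[OF c']
  note L = cfg_len[OF c] and L' = cfg_len[OF c']
  have xH': "x \<in> set H'" using cfg_vin(1)[OF c'] .
  have HH': "H' \<noteq> H" using xH' s1(3) by auto
  obtain K where K: "K = H1 \<or> K = H2" "K \<noteq> H" "set K = V - set H" using other_hex[OF cfg_hex[OF c]] by blast
  have "K = H'" using hex_unique[OF c' K(1)] K(3) cfg_V(3)[OF c] s1(3) by blast
  then have H'set: "set H' = V - set H" using K by simp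
  have vH: "v \<in> set H" "p \<in> set H" using cfg_vin(1)[OF c] s1(1) by auto
  have "A \<in> {f\<in>F. x \<in> set f}" using cfg_inF(2)[OF c] st(1) by auto
  then have "A \<in> {H',A',B',S',C'}" using cfg_faces[OF c'] by blast
  moreover have "A \<noteq> H'" "A \<noteq> S'" using L L' by auto
  moreover have "A \<noteq> A'"
  proof
    assume "A = A'"
    then have "p' \<in> {v,p,x}" using st st' by auto
    then show False using s1'(1) H'set vH u'(11) by auto
  qed
  moreover have "A \<noteq> C'"
  proof
    assume "A = C'"
    then have "q' \<in> {v,p,x}" using st st' by auto
    then show False using s1'(2) H'set vH u'(15) by auto
  qed
  ultimately have AB': "A = B'" by auto
  then have "{x,x',y'} = {v,p,x}" using st st' by simp
  then have xy': "{x',y'} = {v,p}" using u u' by (auto simp: doubleton_eq_iff)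
  have xv: "x' = v"
  proof (rule ccontr)
    assume "x' \<noteq> v"
    then have "y' = v" using xy' by (auto simp: doubleton_eq_iff)
    then have "EF {x,v} = {A,S'}" using E'(3) AB' by simp
    moreover have "EF {x,v} = {A,B}" using E(2) by (simp add: insert_commute)
    ultimately have "S' = B" using cfg_fdist[OF c] by (auto simp: doubleton_eq_iff)
    then show False using L L' by simp
  qed
  then show "x' = v" .
  show yp: "y' = p" using xy' xv u by (auto simp: doubleton_eq_iff)
  have "EF {x,v} = {A',A}" using E'(2) AB' xv by simp
  moreover have "EF {x,v} = {A,B}" using E(2) by (simp add: insert_commute)
  ultimately show AB: "A' = B" using cfg_fdist[OF c'] AB' by (auto simp: doubleton_eq_iff)
  show "B' = A" using AB' by simp
  have "{x,p',v} = {v,x,y}" using st'(1) st(2) AB xv by simp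
  then show "p' = y" using u u' xv by (auto simp: doubleton_eq_iff insert_commute)
  show "EF {x,p} = {A,S'}" using E'(3) AB' yp by simp
qed

lemma orient:
  assumes c: "cfg v H A B S C p x y z q"
    and cx: "cfg x Hx Ax Bx Sx Cx px xx yx zx qx"
    and cp: "cfg p H'' A'' B'' S'' C'' p'' x'' y'' z'' q''"
  shows "q'' = v" "z'' = x" "C'' = A"
proof -
  note s1 = S1[OF c] and s1p = S1[OF cp]
  note u = cfg_udist[OF c] and up = cfg_udist[OF cp]
  note st = cfg_sets[OF c] and stp = cfg_sets[OF cp]
  note E = cfg_EF[OF c] and Ep = cfg_EF[OF cp]
  note L = cfg_len[OF c] and Lp = cfg_len[OF cp]
  have pH: "p \<in> set H" using s1(1) .
  have HH: "H'' = H" using hex_unique[OF cp cfg_hex[OF c] pH] by simp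
  have vH: "v \<in> set H" using cfg_vin(1)[OF c] .
  have Exp: "EF {p,x} = {A,Sx}" using apex(6)[OF c cx] by (simp add: insert_commute)
  have "A \<in> {f\<in>F. p \<in> set f}" using cfg_inF(2)[OF c] st(1) by auto
  then have "A \<in> {H'',A'',B'',S'',C''}" using cfg_faces[OF cp] by blast
  moreover have "A \<noteq> H''" "A \<noteq> S''" using L Lp by auto
  moreover have "A \<noteq> B''"
  proof
    assume "A = B''"
    then have "x'' \<in> {v,p,x}" "y'' \<in> {v,p,x}" using st stp by auto
    moreover have "x'' \<noteq> v" "y'' \<noteq> v" using s1p(3,4) HH vH by auto
    ultimately show False using up by auto
  qed
  moreover have "A \<noteq> A''"
  proof
    assume AA: "A = A''"
    then have "x'' \<in> {v,p,x}" using st stp by auto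
    moreover have "x'' \<noteq> v" using s1p(3) HH vH by auto
    ultimately have "x'' = x" using up by auto
    then have "EF {p,x} = {A,B''}" using Ep(2) AA by simp
    then have "B'' = Sx" using Exp cfg_fdist[OF cp] AA by (auto simp: doubleton_eq_iff)
    then show False using Lp cfg_len(4)[OF cx] by simp
  qed
  ultimately have AC: "A = C''" by auto
  then show "C'' = A" by simp
  have zx: "z'' \<in> {v,p,x}" "q'' \<in> {v,p,x}" using st stp AC by auto
  have "z'' \<noteq> v" using s1p(5) HH vH by auto
  then show "z'' = x" using zx up by auto
  have "q'' \<noteq> x" using s1p(2) HH s1(3) by auto
  then show "q'' = v" using zx up by auto
qed

lemma square:
  assumes c: "cfg v H A B S C p x y z q"
    and w: "set S = {v,y,z,w}" "w \<notin> {v,y,z}"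
    and cw: "cfg w H' A' B' S' C' p' x' y' z' q'"
  shows "w \<in> set H" "S' = S" "{y',z'} = {y,z}" "H' = H"
proof -
  note s1 = S1[OF c] and s1w = S1[OF cw]
  note u = cfg_udist[OF c] and uw = cfg_udist[OF cw]
  have SF: "S \<in> F" using cfg_inF(4)[OF c] .
  have wV: "w \<in> V" using inV[OF SF] w by auto
  obtain K where K: "K = H1 \<or> K = H2" "K \<noteq> H" "set K = V - set H" using other_hex[OF cfg_hex[OF c]] by blast
  have yzK: "y \<in> set K" "z \<in> set K" using K s1 cfg_V[OF c] by auto
  have KF: "K \<in> F" "length K = 6" using K H1F by auto
  show wH: "w \<in> set H"
  proof (rule ccontr)
    assume "w \<notin> set H"
    then have "w \<in> set K" using K wV by auto
    moreover have "S \<noteq> K" using cfg_len(4)[OF c] KF by auto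
    ultimately show False using three_common[OF SF KF(1), of y z w] w yzK u by auto
  qed
  show HH: "H' = H" using hex_unique[OF cw cfg_hex[OF c] wH] by simp
  have "S \<in> {f\<in>F. w \<in> set f}" using SF w by auto
  then have "S \<in> {H',A',B',S',C'}" using cfg_faces[OF cw] by blast
  then show SS: "S' = S" using cfg_len[OF c] cfg_len[OF cw] by auto
  have yz': "y' \<in> set S" "z' \<in> set S" using face_edge_sub[OF cfg_edges(6)[OF cw]] face_edge_sub[OF cfg_edges(7)[OF cw]] SS by auto
  have "y' \<notin> set H" "z' \<notin> set H" using s1w HH by auto
  then have "y' \<in> {y,z}" "z' \<in> {y,z}" using yz' w wH cfg_vin(1)[OF c] by auto
  then show "{y',z'} = {y,z}" using uw(8) u(8) by auto
qed

end



context SEM2 begin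

definition cf where
  "cf v = (SOME t. case t of (H,A,B,S,C,p,x,y,z,q) \<Rightarrow> cfg v H A B S C p x y z q)"

definition "HH v = fst (cf v)"
definition "AA v = fst (snd (cf v))"
definition "BB v = fst (snd (snd (cf v)))"
definition "SS v = fst (snd (snd (snd (cf v))))"
definition "CC v = fst (snd (snd (snd (snd (cf v)))))"
definition "sv v = fst (snd (snd (snd (snd (snd (cf v))))))"
definition "Xv v = fst (snd (snd (snd (snd (snd (snd (cf v)))))))"
definition "yv v = fst (snd (snd (snd (snd (snd (snd (snd (cf v))))))))"
definition "zv v = fst (snd (snd (snd (snd (snd (snd (snd (snd (cf v)))))))))"
definition "qv v = snd (snd (snd (snd (snd (snd (snd (snd (snd (cf v)))))))))"

lemma cfgV: assumes v: "v \<in> V"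
  shows "cfg v (HH v) (AA v) (BB v) (SS v) (CC v) (sv v) (Xv v) (yv v) (zv v) (qv v)"
proof -
  obtain H A B S C p x y z q where "cfg v H A B S C p x y z q" using local_cfg[OF v] by blast
  then have "\<exists>t. case t of (H,A,B,S,C,p,x,y,z,q) \<Rightarrow> cfg v H A B S C p x y z q"
    by (intro exI[of _ "(H,A,B,S,C,p,x,y,z,q)"]) simp
  then have "case cf v of (H,A,B,S,C,p,x,y,z,q) \<Rightarrow> cfg v H A B S C p x y z q"
    unfolding cf_def by (rule someI_ex)
  moreover have "cf v = (HH v, AA v, BB v, SS v, CC v, sv v, Xv v, yv v, zv v, qv v)"
    unfolding HH_def AA_def BB_def SS_def CC_def sv_def Xv_def yv_def zv_def qv_def by simp
  ultimately show ?thesis by simp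
qed

lemma sV: "v \<in> V \<Longrightarrow> sv v \<in> V" and XV: "v \<in> V \<Longrightarrow> Xv v \<in> V"
  using cfg_V[OF cfgV] by auto

lemma R1: assumes v: "v \<in> V" shows "Xv (Xv v) = v" "sv (Xv v) = yv v"
  using apex[OF cfgV[OF v] cfgV[OF XV[OF v]]] by auto

lemma R2: assumes v: "v \<in> V" shows "qv (sv v) = v" "zv (sv v) = Xv v"
  using orient[OF cfgV[OF v] cfgV[OF XV[OF v]] cfgV[OF sV[OF v]]] by auto

lemma ss_neq: assumes v: "v \<in> V" shows "sv (sv v) \<noteq> v"
  using cfg_udist(4)[OF cfgV[OF sV[OF v]]] R2(1)[OF v] by simp

lemma s_inj: "inj_on sv V"
  by (rule inj_onI) (metis R2(1))

lemma s_surj: "sv ` V = V"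
  using endo_inj_surj[OF finV _ s_inj] sV by blast

lemma hex_of: assumes v: "v \<in> V" shows "HH v = H1 \<or> HH v = H2" "v \<in> set (HH v)"
  using cfg_hex[OF cfgV[OF v]] cfg_vin(1)[OF cfgV[OF v]] by auto

lemma s_hex: assumes v: "v \<in> V" "v \<in> set K" "K = H1 \<or> K = H2" shows "sv v \<in> set K"
proof -
  have "K = HH v" using hex_unique[OF cfgV[OF v(1)] v(3,2)] .
  then show ?thesis using S1(1)[OF cfgV[OF v(1)]] by simp
qed

lemma X_hex: assumes v: "v \<in> V" "v \<in> set K" "K = H1 \<or> K = H2" shows "Xv v \<notin> set K"
proof -
  have "K = HH v" using hex_unique[OF cfgV[OF v(1)] v(3,2)] .
  then show ?thesis using S1(3)[OF cfgV[OF v(1)]] by simp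
qed

definition "Pv v = (SOME w. set (SS v) = {v, yv v, zv v, w} \<and> w \<notin> {v, yv v, zv v})"

lemma Pv_spec: assumes v: "v \<in> V" shows "set (SS v) = {v, yv v, zv v, Pv v}" "Pv v \<notin> {v, yv v, zv v}"
proof -
  have "\<exists>w. set (SS v) = {v, yv v, zv v, w} \<and> w \<notin> {v, yv v, zv v}" using cfg_sq[OF cfgV[OF v]] .
  then have "set (SS v) = {v, yv v, zv v, Pv v} \<and> Pv v \<notin> {v, yv v, zv v}"
    unfolding Pv_def by (rule someI_ex)
  then show "set (SS v) = {v, yv v, zv v, Pv v}" "Pv v \<notin> {v, yv v, zv v}" by auto
qed

lemma PV: assumes v: "v \<in> V" shows "Pv v \<in> V"
  using Pv_spec(1)[OF v] inV[OF cfg_inF(4)[OF cfgV[OF v]]] by auto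

lemma P_props: assumes v: "v \<in> V"
  shows "Pv v \<in> set (HH v)" "Pv v \<noteq> v" "Pv (Pv v) = v" "Pv v = sv (Xv (sv (Xv v)))"
proof -
  let ?w = "Pv v"
  note w = Pv_spec[OF v]
  have wV: "?w \<in> V" using PV[OF v] .
  note sq = square[OF cfgV[OF v] w cfgV[OF wV]]
  show "?w \<in> set (HH v)" using sq(1) .
  show wv: "?w \<noteq> v" using w(2) by auto
  have Sw: "set (SS ?w) = {v, yv v, zv v, ?w}" using sq(2) w(1) by simp
  have "set (SS ?w) = {?w, yv ?w, zv ?w, Pv ?w}" "Pv ?w \<notin> {?w, yv ?w, zv ?w}" using Pv_spec[OF wV] by auto
  then show "Pv ?w = v" using Sw sq(3) w(2) by (auto simp: insert_commute doubleton_eq_iff)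
  have XVv: "Xv v \<in> V" "Xv ?w \<in> V" using XV v wV by auto
  have yy: "yv ?w \<noteq> yv v"
  proof
    assume "yv ?w = yv v"
    then have "sv (Xv ?w) = sv (Xv v)" using R1(2) v wV by simp
    then have "Xv ?w = Xv v" using s_inj XVv unfolding inj_on_def by blast
    then have "Xv (Xv ?w) = Xv (Xv v)" by simp
    then show False using R1(1) v wV wv by simp
  qed
  then have zw: "zv ?w = yv v" using sq(3) by (auto simp: doubleton_eq_iff)
  obtain u where u: "u \<in> V" "?w = sv u" using s_surj wV by blast
  have "zv ?w = Xv u" using R2(2)[OF u(1)] u(2) by simp
  then have "Xv u = yv v" using zw by simp
  then have "u = Xv (yv v)" using R1(1)[OF u(1)] by metis
  then show "?w = sv (Xv (sv (Xv v)))" using u(2) R1(2)[OF v] by simp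
qed

end



lemma invol_permutes:
  assumes "\<And>x. p (p x) = x" "\<And>x. x \<notin> S \<Longrightarrow> p x = x"
  shows "p permutes S"
  unfolding permutes_def using assms by metis

lemma invol_sign:
  assumes "finite S" "p permutes S" "\<forall>x\<in>S. p x \<noteq> x" "\<forall>x. p (p x) = x"
  shows "sign p = (-1) ^ (card S div 2)"
  using assms
proof (induct "card S" arbitrary: S p rule: less_induct)
  case less
  show ?case
  proof (cases "S = {}")
    case True
    then have "p = id" using less.prems(2) by simp
    then show ?thesis using True by simp
  next
    case False
    then obtain a where a: "a \<in> S" by blast
    define b where "b = p a"
    have b: "b \<in> S" "b \<noteq> a" using a less.prems(2,3) permutes_in_image unfolding b_def by fastforce+
    have pb: "p b = a" using less.prems(4) unfolding b_def by simp
    define q where "q = transpose a b \<circ> p"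
    define T where "T = S - {a,b}"
    have pq: "p = transpose a b \<circ> q" unfolding q_def by (simp add: fun_eq_iff)
    have qS: "q permutes S" unfolding q_def using permutes_compose[OF less.prems(2) permutes_swap_id[OF a b(1)]] .
    have qab: "q a = a" "q b = b" unfolding q_def using pb by (auto simp: b_def)
    have qT: "q permutes T"
      by (rule permutes_superset[OF qS]) (auto simp: T_def qab)
    have pout: "\<And>x. x \<in> T \<Longrightarrow> p x \<notin> {a,b}"
    proof -
      fix x assume x: "x \<in> T"
      show "p x \<notin> {a,b}"
      proof
        assume "p x \<in> {a,b}"
        then have "p (p x) \<in> {p a, p b}" by auto
        then have "x \<in> {b, a}" using less.prems(4) pb by (simp add: b_def)
        then show False using x T_def by auto
      qed
    qed
    have qx: "\<And>x. x \<in> T \<Longrightarrow> q x = p x" unfolding q_def using pout by (auto simp: transpose_def)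
    have qfix: "\<forall>x\<in>T. q x \<noteq> x" using qx less.prems(3) T_def by auto
    have qinv: "\<forall>x. q (q x) = x"
    proof
      fix x show "q (q x) = x"
      proof (cases "x \<in> T")
        case True
        then have "p x \<in> T" using pout less.prems(2) permutes_in_image T_def by fastforce
        then show ?thesis using True qx less.prems(4) by simp
      next
        case False
        then show ?thesis using permutes_not_in[OF qT] by simp
      qed
    qed
    have cT: "card T = card S - 2" unfolding T_def using less.prems(1) a b by (simp add: card_Diff_subset)
    have cS: "card S \<ge> 2"
    proof -
      have "card {a,b} \<le> card S" using a b less.prems(1) by (intro card_mono) auto
      then show ?thesis using b by simp
    qed
    have IH: "sign q = (-1) ^ (card T div 2)"
      using less.hyps[of T q] cT cS less.prems(1) qT qfix qinv T_def by auto
    have "sign p = sign (transpose a b) * sign q" unfolding pq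
      by (rule sign_compose[OF permutation_swap_id]) (use qT less.prems(1) T_def permutation_permutes in blast)
    also have "\<dots> = - ((-1) ^ (card T div 2))" using IH b by (simp add: sign_swap_id)
    also have "\<dots> = (-1) ^ (card S div 2)"
    proof -
      have "card S div 2 = Suc (card T div 2)" using cT cS by simp
      then show ?thesis by simp
    qed
    finally show ?thesis .
  qed
qed

lemma cyc6:
  assumes "distinct [a,b,c,d,e,f]"
  shows "cycle_of_list [a,b,c,d,e,f] x = (if x = a then b else if x = b then c else if x = c then d
    else if x = d then e else if x = e then f else if x = f then a else x)"
  using assms by (auto simp: transpose_def)

lemma sign_cyc6:
  assumes "distinct [a,b,c,d,e,f]"
  shows "sign (cycle_of_list [a,b,c,d,e,f]) = -1"
  using assms by (simp add: sign_compose permutation_swap_id permutation_compose sign_swap_id)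


context SEM2 begin

lemma hex_cyc:
  assumes K: "K = H1 \<or> K = H2" and Kl: "K = [a,b,c,d,e,f]"
  shows "sign (\<lambda>x. if x \<in> set K then sv x else x) = -1 \<and> permutation (\<lambda>x. if x \<in> set K then sv x else x)"
proof -
  have dK: "distinct [a,b,c,d,e,f]" using face_ok H1F K Kl by metis
  have KV: "set K \<subseteq> V" using hexsV K by auto
  have nb: "sv t \<in> {u. {t,u} \<in> {{a,b},{b,c},{c,d},{d,e},{e,f},{f,a}}}" if t: "t \<in> set K" for t
  proof -
    have tV: "t \<in> V" using t KV by auto
    have "K = HH t" using hex_unique[OF cfgV[OF tV] K t] .
    then have "{t, sv t} \<in> face_edges K" using cfg_edges(1)[OF cfgV[OF tV]] by simp
    then show ?thesis using Kl by (simp add: fe6)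
  qed
  have ss: "sv (sv t) \<noteq> t" if "t \<in> set K" for t using ss_neq that KV by auto
  have tK: "a \<in> set K" "b \<in> set K" "c \<in> set K" "d \<in> set K" "e \<in> set K" "f \<in> set K" using Kl by auto
  have "sv a = b \<or> sv a = f" using nb[OF tK(1)] dK by (auto simp: doubleton_eq_iff)
  then have "(\<lambda>x. if x \<in> set K then sv x else x) = cycle_of_list [a,b,c,d,e,f] \<or>
             (\<lambda>x. if x \<in> set K then sv x else x) = cycle_of_list [a,f,e,d,c,b]"
  proof
    assume h: "sv a = b"
    have hb: "sv b = c" using nb[OF tK(2)] ss[OF tK(1)] h dK by (auto simp: doubleton_eq_iff)
    have hc: "sv c = d" using nb[OF tK(3)] ss[OF tK(2)] hb dK by (auto simp: doubleton_eq_iff)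
    have hd: "sv d = e" using nb[OF tK(4)] ss[OF tK(3)] hc dK by (auto simp: doubleton_eq_iff)
    have he: "sv e = f" using nb[OF tK(5)] ss[OF tK(4)] hd dK by (auto simp: doubleton_eq_iff)
    have hf: "sv f = a" using nb[OF tK(6)] ss[OF tK(5)] he dK by (auto simp: doubleton_eq_iff)
    show ?thesis
      by (rule disjI1, rule ext) (use h hb hc hd he hf dK Kl in \<open>auto simp add: cyc6[OF dK]\<close>)
  next
    assume h: "sv a = f"
    have hf: "sv f = e" using nb[OF tK(6)] ss[OF tK(1)] h dK by (auto simp: doubleton_eq_iff)
    have he: "sv e = d" using nb[OF tK(5)] ss[OF tK(6)] hf dK by (auto simp: doubleton_eq_iff)
    have hd: "sv d = c" using nb[OF tK(4)] ss[OF tK(5)] he dK by (auto simp: doubleton_eq_iff)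
    have hc: "sv c = b" using nb[OF tK(3)] ss[OF tK(4)] hd dK by (auto simp: doubleton_eq_iff)
    have hb: "sv b = a" using nb[OF tK(2)] ss[OF tK(3)] hc dK by (auto simp: doubleton_eq_iff)
    have dK': "distinct [a,f,e,d,c,b]" using dK by auto
    show ?thesis
      by (rule disjI2, rule ext) (use h hb hc hd he hf dK' Kl in \<open>auto simp add: cyc6[OF dK']\<close>)
  qed
  moreover have dK': "distinct [a,f,e,d,c,b]" using dK by auto
  ultimately show ?thesis
  proof (elim disjE)
    assume "(\<lambda>x. if x \<in> set K then sv x else x) = cycle_of_list [a,b,c,d,e,f]"
    then show ?thesis using sign_cyc6[OF dK] permutation_of_cycle[of "[a,b,c,d,e,f]"] by simp
  next
    assume "(\<lambda>x. if x \<in> set K then sv x else x) = cycle_of_list [a,f,e,d,c,b]"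
    then show ?thesis using sign_cyc6[OF dK'] permutation_of_cycle[of "[a,f,e,d,c,b]"] by simp
  qed
qed

lemma contradiction: False
proof -
  obtain a b c d e f where K1: "H1 = [a,b,c,d,e,f]"
    using H1F(3) by (auto simp: length_Suc_conv numeral_eq_Suc)
  obtain a' b' c' d' e' f' where K2: "H2 = [a',b',c',d',e',f']"
    using H1F(4) by (auto simp: length_Suc_conv numeral_eq_Suc)
  define s1 where "s1 = (\<lambda>x. if x \<in> set H1 then sv x else x)"
  define s2 where "s2 = (\<lambda>x. if x \<in> set H2 then sv x else x)"
  define X where "X = (\<lambda>x. if x \<in> V then Xv x else x)"
  define P where "P = (\<lambda>x. if x \<in> set H1 then Pv x else x)"
  have sg1: "sign s1 = -1" unfolding s1_def using hex_cyc K1 by blast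
  have sg2: "sign s2 = -1" unfolding s2_def using hex_cyc K2 by blast
  have h12: "\<And>x. x \<in> V \<Longrightarrow> x \<in> set H1 \<longleftrightarrow> x \<notin> set H2" using one_hex by blast
  have HV: "\<And>x. x \<in> set H1 \<Longrightarrow> x \<in> V" "\<And>x. x \<in> set H2 \<Longrightarrow> x \<in> V" using hexsV by auto
  have XX: "X (X x) = x" for x unfolding X_def using R1(1) XV by auto
  have Xperm: "X permutes V" by (rule invol_permutes[OF XX]) (simp add: X_def)
  have pX: "permutation X" using Xperm finV permutation_permutes by blast
  have ps1: "permutation s1" "permutation s2"
    unfolding s1_def s2_def using hex_cyc K1 K2 by blast+
  have Peq: "P = s1 \<circ> X \<circ> s2 \<circ> X"
  proof
    fix x
    show "P x = (s1 \<circ> X \<circ> s2 \<circ> X) x"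
    proof (cases "x \<in> set H1")
      case True
      have xV: "x \<in> V" using HV True by simp
      have "Xv x \<notin> set H1" using X_hex[OF xV True] by simp
      then have X2: "Xv x \<in> set H2" using h12 XV[OF xV] by blast
      have XV2: "Xv x \<in> V" using XV[OF xV] .
      have sX: "sv (Xv x) \<in> set H2" using s_hex[OF XV2 X2] by simp
      have sXV: "sv (Xv x) \<in> V" using sV[OF XV2] .
      have "Xv (sv (Xv x)) \<notin> set H2" using X_hex[OF sXV sX] by simp
      then have X1: "Xv (sv (Xv x)) \<in> set H1" using h12 XV[OF sXV] by blast
      show ?thesis using True xV X2 XV2 sX sXV X1 P_props(4)[OF xV]
        unfolding P_def s1_def s2_def X_def by simp
    next
      case False
      show ?thesis
      proof (cases "x \<in> V")
        case True
        then have x2: "x \<in> set H2" using h12 False by blast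
        have "Xv x \<notin> set H2" using X_hex[OF True x2] by simp
        moreover have "Xv (Xv x) = x" using R1(1)[OF True] .
        ultimately show ?thesis using False True XV[OF True]
          unfolding P_def s1_def s2_def X_def by simp
      next
        case nv: False
        then have "x \<notin> set H2" using HV by blast
        then show ?thesis using False nv unfolding P_def s1_def s2_def X_def by simp
      qed
    qed
  qed
  have "sign P = sign s1 * sign X * sign s2 * sign X"
    unfolding Peq using pX ps1
    by (simp add: sign_compose permutation_compose)
  also have "\<dots> = 1" using sg1 sg2 by (simp add: mult.assoc mult.left_commute[of "sign X"])
  finally have sP: "sign P = 1" .
  have PP: "P (P x) = x" for x
  proof (cases "x \<in> set H1")
    case True
    have xV: "x \<in> V" using HV True by simp
    have "HH x = H1" using hex_unique[OF cfgV[OF xV] _ True] by simp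
    then have "Pv x \<in> set H1" using P_props(1)[OF xV] by simp
    then show ?thesis using True P_props(3)[OF xV] unfolding P_def by simp
  qed (simp add: P_def)
  have Pperm: "P permutes set H1" by (rule invol_permutes[OF PP]) (simp add: P_def)
  have Pfix: "\<forall>x\<in>set H1. P x \<noteq> x" using P_props(2) HV unfolding P_def by auto
  have c6: "card (set H1) = 6" using face_ok[OF H1F(1)] H1F(3) by (simp add: distinct_card)
  have "sign P = (-1) ^ (card (set H1) div 2)" using invol_sign[OF _ Pperm Pfix] PP by simp
  then have "sign P = -1" using c6 by simp
  then show False using sP by simp
qed

end


theorem lemma4p2:
  fixes F :: "'a list set"
  shows "\<not> (semi_equivelar_of_type F [3, 3, 4, 3, 6] \<and> euler_char F = -1)"
proof
  assume h: "semi_equivelar_of_type F [3, 3, 4, 3, 6] \<and> euler_char F = -1"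
  interpret SEM F using h by unfold_locales blast
  have "card {f\<in>F. length f = 6} = 2" using counts(2) h by blast
  then obtain H1 H2 where e: "{f\<in>F. length f = 6} = {H1,H2}" and d: "H1 \<noteq> H2"
    by (auto simp: card_2_iff)
  interpret SEM2 F H1 H2 using e d by unfold_locales
  show False by (rule contradiction)
qed

end
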